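(* Let $A$ be a nicely essential subring of a ring $S$. Then: (a) If $L,L'$ are left ideals of $A$ with $L\cap L'=0$, then $SL\cap SL'=0$; moreover $\operatorname{udim}(S)=\operatorname{udim}(A)$. Also $\mathcal Z(A)=A\cap\mathcal Z(S)$, and $\mathcal Z(A)$ is a nicely essential left $A$-submodule of $\mathcal Z(S)$ (i.e. for every finite set $E$ of non-zero elements of $\mathcal Z(S)$ there is $a\in A$ with $0\ne ax\in\mathcal Z(A)$ for all $x\in E$). (b) Let $L\subseteq S$ be any non-zero left $A$-submodule. Then the left ideal $A\cap L$ of $A$ is uniform (respectively, essential) in $A$ if and only if the left ideal $SL$ of $S$ is uniform (respectively, essential) in $S$.
   Context: A subring $A$ of a ring $S$ (same identity) is a nicely essential subring if for every finite set $E\subseteq S$ of non-zero elements there exists $a\in A$ with $0\neq ax\in A$ for all $x\in E$. $\operatorname{udim}$ of a ring denotes its left uniform dimension (supremum of cardinals $\mathfrak N$ such that the ring contains a direct sum of $\mathfrak N$ non-zero left ideals; possibly infinite). For a ring $B$, $\mathcal Z(B)$ is the left singular ideal: the set of $x\in B$ whose left annihilator $\{b\in B: bx=0\}$ contains an essential left ideal of $B$. For a subset $L\subseteq S$, $SL$ is the additive subgroup generated by products $sl$. *)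

theory Defs
  imports Main
begin

text \<open>Everything lives inside one ambient (not necessarily commutative) ring S,
  represented by the type 'a :: ring_1; subrings are subsets of that type.\<close>

definition is_subring :: "'a::ring_1 set \<Rightarrow> bool" where
  "is_subring A \<longleftrightarrow> 1 \<in> A \<and> 0 \<in> A \<and> (\<forall>x\<in>A. \<forall>y\<in>A. x + y \<in> A \<and> x * y \<in> A) \<and> (\<forall>x\<in>A. - x \<in> A)"

definition nicely_essential_subring :: "'a::ring_1 set \<Rightarrow> bool" where
  "nicely_essential_subring A \<longleftrightarrow> is_subring A \<and>
     (\<forall>E. finite E \<and> 0 \<notin> E \<longrightarrow> (\<exists>a\<in>A. \<forall>x\<in>E. a * x \<noteq> 0 \<and> a * x \<in> A))"

definition left_submodule :: "'a::ring_1 set \<Rightarrow> 'a set \<Rightarrow> bool" where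
  "left_submodule B L \<longleftrightarrow> 0 \<in> L \<and> (\<forall>x\<in>L. \<forall>y\<in>L. x + y \<in> L) \<and> (\<forall>x\<in>L. - x \<in> L)
     \<and> (\<forall>b\<in>B. \<forall>x\<in>L. b * x \<in> L)"

text \<open>Left ideal of the ring B (B a subring; B = UNIV for S itself).\<close>
definition left_ideal :: "'a::ring_1 set \<Rightarrow> 'a set \<Rightarrow> bool" where
  "left_ideal B L \<longleftrightarrow> L \<subseteq> B \<and> left_submodule B L"

definition essential_in :: "'a::ring_1 set \<Rightarrow> 'a set \<Rightarrow> bool" where
  "essential_in B L \<longleftrightarrow> left_ideal B L \<and>
     (\<forall>K. left_ideal B K \<and> K \<noteq> {0} \<longrightarrow> L \<inter> K \<noteq> {0})"

definition uniform_in :: "'a::ring_1 set \<Rightarrow> 'a set \<Rightarrow> bool" where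
  "uniform_in B L \<longleftrightarrow> left_ideal B L \<and> L \<noteq> {0} \<and>
     (\<forall>K K'. left_ideal B K \<and> left_ideal B K' \<and> K \<subseteq> L \<and> K' \<subseteq> L \<and> K \<noteq> {0} \<and> K' \<noteq> {0}
        \<longrightarrow> K \<inter> K' \<noteq> {0})"

definition sing :: "'a::ring_1 set \<Rightarrow> 'a set" where
  "sing B = {x \<in> B. \<exists>E. essential_in B E \<and> (\<forall>b\<in>E. b * x = 0)}"

inductive_set SL :: "'a::ring_1 set \<Rightarrow> 'a set" for L where
  gen: "l \<in> L \<Longrightarrow> s * l \<in> SL L"
| zero: "0 \<in> SL L"
| add: "x \<in> SL L \<Longrightarrow> y \<in> SL L \<Longrightarrow> x + y \<in> SL L"
| neg: "x \<in> SL L \<Longrightarrow> - x \<in> SL L"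

definition indep_ideals :: "'a::ring_1 set \<Rightarrow> 'a set set \<Rightarrow> bool" where
  "indep_ideals B F \<longleftrightarrow> (\<forall>L\<in>F. left_ideal B L \<and> L \<noteq> {0}) \<and>
     (\<forall>G x. finite G \<and> G \<subseteq> F \<and> (\<forall>L\<in>G. x L \<in> L) \<and> (\<Sum>L\<in>G. x L) = 0 \<longrightarrow> (\<forall>L\<in>G. x L = 0))"

text \<open>udim B is bounded above by the cardinal of K: every direct sum of non-zero left
  ideals of B has at most |K| summands.  Since such families have cardinality at most
  |Pow UNIV|, sets K :: 'a set set realise every relevant cardinal, so
  "udim B1 = udim B2" (equality of suprema of cardinals) is expressed as equality of
  the classes of upper bounds.\<close>
definition udim_le :: "'a::ring_1 set \<Rightarrow> 'a set set \<Rightarrow> bool" where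
  "udim_le B K \<longleftrightarrow> (\<forall>F. indep_ideals B F \<longrightarrow> (\<exists>f. inj_on f F \<and> f ` F \<subseteq> K))"

end

theory Submission
  imports Defs
begin


lemma ne_sub: "nicely_essential_subring A \<Longrightarrow> is_subring A"
  by (simp add: nicely_essential_subring_def)

lemma ne_pick:
  assumes ne: "nicely_essential_subring A" and fin: "finite E"
  shows "\<exists>a\<in>A. \<forall>x\<in>E. a*x \<in> A \<and> (x \<noteq> 0 \<longrightarrow> a*x \<noteq> 0)"
proof -
  have "finite (E - {0}) \<and> 0 \<notin> E - {0}" using fin by auto
  then obtain a where a: "a \<in> A" "\<forall>x\<in>E-{0}. a*x \<noteq> 0 \<and> a*x \<in> A"
    using ne unfolding nicely_essential_subring_def by blast
  have "0 \<in> A" using ne unfolding nicely_essential_subring_def is_subring_def by blast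
  then show ?thesis using a by (metis DiffI mult_zero_right singletonD)
qed

lemma SL_fin:
  assumes L: "left_submodule A L" and y: "y \<in> SL L"
  shows "\<exists>F. finite F \<and> (\<forall>a\<in>A. (\<forall>s\<in>F. a*s \<in> A) \<longrightarrow> a*y \<in> L)"
  using y
proof induction
  case (gen l s)
  show ?case
  proof (rule exI[of _ "{s}"], intro conjI ballI impI)
    fix a assume "a \<in> A" "\<forall>s'\<in>{s}. a*s' \<in> A"
    then have "a*s \<in> A" by simp
    then have "(a*s)*l \<in> L" using L gen unfolding left_submodule_def by blast
    then show "a*(s*l) \<in> L" by (simp add: mult.assoc)
  qed simp
next
  case zero
  show ?case using L by (intro exI[of _ "{}"]) (simp add: left_submodule_def)
next
  case (add x y)
  then obtain F1 F2 where F: "finite F1" "\<forall>a\<in>A. (\<forall>s\<in>F1. a*s \<in> A) \<longrightarrow> a*x \<in> L"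
     "finite F2" "\<forall>a\<in>A. (\<forall>s\<in>F2. a*s \<in> A) \<longrightarrow> a*y \<in> L" by blast
  show ?case
    apply (rule exI[of _ "F1 \<union> F2"])
    using F L unfolding left_submodule_def by (auto simp: distrib_left)
next
  case (neg x)
  then obtain F1 where F: "finite F1" "\<forall>a\<in>A. (\<forall>s\<in>F1. a*s \<in> A) \<longrightarrow> a*x \<in> L" by blast
  show ?case
    apply (rule exI[of _ "F1"])
    using F L unfolding left_submodule_def by auto
qed

lemma SL_pick:
  assumes ne: "nicely_essential_subring A" and G: "finite G"
    and sub: "\<forall>M\<in>G. left_submodule A M \<and> y M \<in> SL M" and E: "finite E"
  shows "\<exists>a\<in>A. (\<forall>M\<in>G. a * y M \<in> M) \<and> (\<forall>x\<in>E. a*x \<in> A \<and> (x \<noteq> 0 \<longrightarrow> a*x \<noteq> 0))"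
proof -
  have "\<forall>M\<in>G. \<exists>F. finite F \<and> (\<forall>a\<in>A. (\<forall>s\<in>F. a*s\<in>A) \<longrightarrow> a * y M \<in> M)"
    using SL_fin sub by blast
  then obtain F where F: "\<forall>M\<in>G. finite (F M) \<and> (\<forall>a\<in>A. (\<forall>s\<in>F M. a*s\<in>A) \<longrightarrow> a * y M \<in> M)"
    by (rule bchoice[THEN exE]) blast
  have fin: "finite (E \<union> \<Union>(F ` G))" using G E F by auto
  from ne_pick[OF ne fin] obtain a where a: "a \<in> A"
    "\<forall>x\<in>E \<union> \<Union>(F ` G). a*x \<in> A \<and> (x \<noteq> 0 \<longrightarrow> a*x \<noteq> 0)" by blast
  have "\<forall>M\<in>G. a * y M \<in> M"
  proof
    fix M assume M: "M \<in> G"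
    then have "\<forall>s\<in>F M. a*s\<in>A" using a(2) by blast
    then show "a * y M \<in> M" using F M a(1) by blast
  qed
  moreover have "\<forall>x\<in>E. a*x \<in> A \<and> (x \<noteq> 0 \<longrightarrow> a*x \<noteq> 0)" using a(2) by blast
  ultimately show ?thesis using a(1) by blast
qed

lemma SL_pick1:
  assumes ne: "nicely_essential_subring A" and L: "left_submodule A L" and y: "y \<in> SL L"
   and yn: "y \<noteq> 0"
  shows "\<exists>a\<in>A. a*y \<in> L \<and> a*y \<in> A \<and> a*y \<noteq> 0"
  using SL_pick[OF ne, of "{L}" "\<lambda>_. y" "{y}"] L y yn by auto

lemma SL_pick2:
  assumes ne: "nicely_essential_subring A" and L: "left_submodule A L" and y: "y \<in> SL L"
   and L': "left_submodule A L'" and y': "y \<in> SL L'" and yn: "y \<noteq> 0"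
  shows "\<exists>a\<in>A. a*y \<in> L \<and> a*y \<in> L' \<and> a*y \<noteq> 0"
  using SL_pick[OF ne, of "{L,L'}" "\<lambda>_. y" "{y}"] L y yn L' y' by auto

lemma SL_submod: "left_submodule UNIV (SL L)"
proof -
  have "b * x \<in> SL L" if "x \<in> SL L" for b x
    using that
  proof induction
    case (gen l s)
    then show ?case using SL.gen[of l L "b*s"] by (simp add: mult.assoc)
  next
    case zero then show ?case by (simp add: SL.zero)
  next
    case (add x y) then show ?case by (simp add: distrib_left SL.add)
  next
    case (neg x) then show ?case by (simp add: SL.neg)
  qed
  then show ?thesis unfolding left_submodule_def by (auto intro: SL.intros)
qed

lemma SL_ideal: "left_ideal UNIV (SL L)"
  using SL_submod by (simp add: left_ideal_def)

lemma L_sub_SL: "L \<subseteq> SL L"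
  using SL.gen[of _ L 1] by auto

lemma SL_mono: assumes "L \<subseteq> L'" shows "SL L \<subseteq> SL L'"
proof
  fix x assume "x \<in> SL L" then show "x \<in> SL L'"
    by induction (use assms in \<open>auto intro: SL.intros\<close>)
qed

lemma submod_UNIV: "left_submodule UNIV K \<Longrightarrow> left_submodule A K"
  by (simp add: left_submodule_def)

lemma submod_Int: "left_submodule A K \<Longrightarrow> left_submodule A K' \<Longrightarrow> left_submodule A (K \<inter> K')"
  by (simp add: left_submodule_def)

lemma Int_ideal: "is_subring A \<Longrightarrow> left_submodule A K \<Longrightarrow> left_ideal A (A \<inter> K)"
  by (simp add: left_ideal_def left_submodule_def is_subring_def)

lemma nz_iff: "0 \<in> K \<Longrightarrow> K \<noteq> {0} \<longleftrightarrow> (\<exists>x\<in>K. x \<noteq> 0)"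
  by auto

lemma Int_nz:
  assumes ne: "nicely_essential_subring A" and K: "left_submodule A K" and nz: "K \<noteq> {0}"
  shows "A \<inter> K \<noteq> {0}"
proof -
  have "0 \<in> K" using K by (simp add: left_submodule_def)
  then obtain x where x: "x \<in> K" "x \<noteq> 0" using nz by auto
  obtain a where "a \<in> A" "a*x \<in> A" "a*x \<noteq> 0" using ne_pick[OF ne, of "{x}"] x by auto
  moreover have "a*x \<in> K" using K x \<open>a\<in>A\<close> by (simp add: left_submodule_def)
  ultimately show ?thesis by auto
qed

lemma indep_pair:
  assumes ind: "indep_ideals B F" and L: "L \<in> F" and L': "L' \<in> F" and d: "L \<noteq> L'"
    and v: "v \<in> L" "v \<in> L'"
  shows "v = 0"
proof -
  have "left_ideal B L'" using ind L' by (simp add: indep_ideals_def)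
  then have nv: "- v \<in> L'" using v by (simp add: left_ideal_def left_submodule_def)
  define x where "x = (\<lambda>M. if M = L then v else - v)"
  have "finite {L, L'}" "{L,L'} \<subseteq> F" using L L' by auto
  moreover have "\<forall>M\<in>{L,L'}. x M \<in> M" using v nv d by (auto simp: x_def)
  moreover have "(\<Sum>M\<in>{L,L'}. x M) = 0" using d by (simp add: x_def)
  ultimately have "\<forall>M\<in>{L,L'}. x M = 0" using ind unfolding indep_ideals_def by blast
  then show ?thesis by (simp add: x_def)
qed

lemma indep_image:
  assumes inj: "inj_on h F"
    and H: "\<And>G' x. finite G' \<Longrightarrow> G' \<subseteq> F \<Longrightarrow> (\<forall>L\<in>G'. x L \<in> h L) \<Longrightarrow> sum x G' = 0 \<Longrightarrow> \<forall>L\<in>G'. x L = 0"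
  shows "\<forall>G x. finite G \<and> G \<subseteq> h ` F \<and> (\<forall>M\<in>G. x M \<in> M) \<and> sum x G = 0 \<longrightarrow> (\<forall>M\<in>G. x M = 0)"
proof (intro allI impI)
  fix G x assume a: "finite G \<and> G \<subseteq> h ` F \<and> (\<forall>M\<in>G. x M \<in> M) \<and> sum x G = 0"
  define G' where "G' = F \<inter> h -` G"
  have fG': "finite G'" unfolding G'_def using a inj
    by (metis finite_vimage_IntI inf_commute)
  have img: "h ` G' = G" using a unfolding G'_def by auto
  have injG: "inj_on h G'" using inj unfolding G'_def by (meson inf_le1 inj_on_subset)
  have "sum x G = sum (x \<circ> h) G'" using img injG by (metis sum.reindex)
  then have "\<forall>L\<in>G'. (x \<circ> h) L = 0"
    using H[OF fG', of "x \<circ> h"] a img unfolding G'_def by auto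
  then show "\<forall>M\<in>G. x M = 0" using img by auto
qed



lemma part_a1:
  assumes ne: "nicely_essential_subring A" and L: "left_ideal A L" and L': "left_ideal A L'"
    and d: "L \<inter> L' = {0}"
  shows "SL L \<inter> SL L' = {0}"
proof (rule ccontr)
  assume "SL L \<inter> SL L' \<noteq> {0}"
  moreover have "0 \<in> SL L \<inter> SL L'" by (simp add: SL.zero)
  ultimately obtain y where y: "y \<in> SL L" "y \<in> SL L'" "y \<noteq> 0" by blast
  have Ls: "left_submodule A L" "left_submodule A L'" using L L' by (auto simp: left_ideal_def)
  obtain a where "a \<in> A" "a*y \<in> L" "a*y \<in> L'" "a*y \<noteq> 0"
    using SL_pick2[OF ne Ls(1) y(1) Ls(2) y(2) y(3)] by blast
  then show False using d by blast
qed

lemma sing_closed: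
  assumes x: "x \<in> sing (UNIV::'a::ring_1 set)"
  shows "r * x \<in> sing (UNIV::'a set)"
proof -
  obtain E where E: "essential_in UNIV E" "\<forall>b\<in>E. b * x = 0"
    using x unfolding sing_def by blast
  have Es: "left_submodule UNIV E" using E(1) by (simp add: essential_in_def left_ideal_def)
  define E' where "E' = {s. s * r \<in> E}"
  have "left_submodule UNIV E'"
    using Es unfolding left_submodule_def E'_def
    by (auto simp: distrib_right mult.assoc)
  then have E'i: "left_ideal UNIV E'" by (simp add: left_ideal_def)
  have "E' \<inter> K \<noteq> {0}" if K: "left_ideal UNIV K" "K \<noteq> {0}" for K
  proof (cases "\<forall>k\<in>K. k * r = 0")
    case True
    have "0 \<in> E" using Es by (simp add: left_submodule_def)
    then have "K \<subseteq> E'" using True by (auto simp: E'_def)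
    then show ?thesis using K by (simp add: Int_absorb1)
  next
    case False
    then obtain k where k: "k \<in> K" "k * r \<noteq> 0" by blast
    have Ks: "left_submodule UNIV K" using K by (simp add: left_ideal_def)
    define Kr where "Kr = (\<lambda>k. k * r) ` K"
    have "left_submodule UNIV Kr"
      unfolding left_submodule_def Kr_def
    proof (intro conjI ballI)
      show "0 \<in> (\<lambda>k. k * r) ` K" using Ks by (force simp: left_submodule_def)
    next
      fix u v assume "u \<in> (\<lambda>k. k * r) ` K" "v \<in> (\<lambda>k. k * r) ` K"
      then obtain k1 k2 where "k1 \<in> K" "k2 \<in> K" "u = k1*r" "v = k2*r" by blast
      then show "u + v \<in> (\<lambda>k. k * r) ` K" using Ks
        by (metis (no_types, lifting) distrib_right image_eqI left_submodule_def)
    next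
      fix u assume "u \<in> (\<lambda>k. k * r) ` K"
      then obtain k1 where "k1 \<in> K" "u = k1*r" by blast
      then show "- u \<in> (\<lambda>k. k * r) ` K" using Ks
        by (metis (no_types, lifting) minus_mult_left image_eqI left_submodule_def)
    next
      fix b u assume "u \<in> (\<lambda>k. k * r) ` K"
      then obtain k1 where "k1 \<in> K" "u = k1*r" by blast
      then show "b * u \<in> (\<lambda>k. k * r) ` K" using Ks
        by (metis (no_types, lifting) mult.assoc image_eqI left_submodule_def UNIV_I)
    qed
    then have "left_ideal UNIV Kr" by (simp add: left_ideal_def)
    moreover have "Kr \<noteq> {0}" using k by (auto simp: Kr_def)
    ultimately have "E \<inter> Kr \<noteq> {0}" using E(1) by (simp add: essential_in_def)
    moreover have "0 \<in> E \<inter> Kr" using Es \<open>left_submodule UNIV Kr\<close> by (simp add: left_submodule_def)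
    ultimately obtain z where "z \<in> E" "z \<in> Kr" "z \<noteq> 0" by blast
    then obtain k' where "k' \<in> K" "k' * r \<in> E" "k' * r \<noteq> 0" by (auto simp: Kr_def)
    then have "k' \<in> E' \<inter> K" "k' \<noteq> 0" by (auto simp: E'_def)
    then show ?thesis by blast
  qed
  then have "essential_in UNIV E'" using E'i by (simp add: essential_in_def)
  moreover have "\<forall>b\<in>E'. b * (r * x) = 0" using E(2) by (simp add: E'_def mult.assoc[symmetric])
  ultimately show ?thesis unfolding sing_def by blast
qed

lemma part_sing:
  assumes ne: "nicely_essential_subring A"
  shows "sing A = A \<inter> sing (UNIV::'a::ring_1 set)"
proof
  have sub: "is_subring A" using ne by (rule ne_sub)
  show "sing A \<subseteq> A \<inter> sing UNIV"
  proof
    fix x assume "x \<in> sing A"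
    then obtain E where x: "x \<in> A" and E: "essential_in A E" "\<forall>b\<in>E. b * x = 0"
      unfolding sing_def by blast
    define ann where "ann = {y. y * x = 0}"
    have "left_submodule UNIV ann" unfolding left_submodule_def ann_def
      by (auto simp: distrib_right mult.assoc)
    then have anni: "left_ideal UNIV ann" by (simp add: left_ideal_def)
    have "ann \<inter> K \<noteq> {0}" if K: "left_ideal UNIV K" "K \<noteq> {0}" for K
    proof -
      have Ks: "left_submodule UNIV K" using K by (simp add: left_ideal_def)
      have "left_ideal A (A \<inter> K)" using Int_ideal[OF sub submod_UNIV[OF Ks]] .
      moreover have "A \<inter> K \<noteq> {0}" using Int_nz[OF ne submod_UNIV[OF Ks] K(2)] .
      ultimately have "E \<inter> (A \<inter> K) \<noteq> {0}" using E(1) by (simp add: essential_in_def)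
      moreover have "0 \<in> E \<inter> (A \<inter> K)" using E(1) Ks sub
        by (simp add: essential_in_def left_ideal_def left_submodule_def is_subring_def)
      ultimately obtain z where "z \<in> E" "z \<in> K" "z \<noteq> 0" by blast
      then show ?thesis using E(2) by (auto simp: ann_def)
    qed
    then have "essential_in UNIV ann" using anni by (simp add: essential_in_def)
    then show "x \<in> A \<inter> sing UNIV" using x unfolding sing_def ann_def by auto
  qed
  show "A \<inter> sing UNIV \<subseteq> sing A"
  proof
    fix x assume "x \<in> A \<inter> sing UNIV"
    then obtain E where x: "x \<in> A" and E: "essential_in UNIV E" "\<forall>b\<in>E. b * x = 0"
      unfolding sing_def by blast
    have Es: "left_submodule UNIV E" using E(1) by (simp add: essential_in_def left_ideal_def)
    have AEi: "left_ideal A (A \<inter> E)" using Int_ideal[OF sub submod_UNIV[OF Es]] .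
    have "(A \<inter> E) \<inter> K \<noteq> {0}" if K: "left_ideal A K" "K \<noteq> {0}" for K
    proof -
      have Ks: "left_submodule A K" "K \<subseteq> A" using K by (auto simp: left_ideal_def)
      have "SL K \<noteq> {0}" using L_sub_SL[of K] K(2) Ks(1)
        by (auto simp: left_submodule_def)
      then have "E \<inter> SL K \<noteq> {0}" using E(1) SL_ideal[of K] unfolding essential_in_def by blast
      moreover have "0 \<in> E \<inter> SL K" using Es by (simp add: left_submodule_def SL.zero)
      ultimately obtain y where y: "y \<in> E" "y \<in> SL K" "y \<noteq> 0" by blast
      obtain a where a: "a \<in> A" "a*y \<in> K" "a*y \<noteq> 0" using SL_pick1[OF ne Ks(1) y(2) y(3)] by blast
      have "a*y \<in> E" using Es y(1) by (simp add: left_submodule_def)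
      then have "a*y \<in> (A \<inter> E) \<inter> K" using a Ks(2) by blast
      then show ?thesis using a(3) by blast
    qed
    then have "essential_in A (A \<inter> E)" using AEi by (simp add: essential_in_def)
    then show "x \<in> sing A" using x E(2) unfolding sing_def by blast
  qed
qed

lemma part_a4:
  assumes ne: "nicely_essential_subring A"
    and E: "finite E" "E \<subseteq> sing (UNIV::'a::ring_1 set)" "0 \<notin> E"
  shows "\<exists>a\<in>A. \<forall>x\<in>E. a * x \<noteq> 0 \<and> a * x \<in> sing A"
proof -
  obtain a where a: "a \<in> A" "\<forall>x\<in>E. a*x \<noteq> 0 \<and> a*x \<in> A"
    using ne E unfolding nicely_essential_subring_def by blast
  have "\<forall>x\<in>E. a*x \<in> sing UNIV" using E(2) sing_closed by blast
  then show ?thesis using a part_sing[OF ne] by blast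
qed



lemma indepD:
  assumes "indep_ideals B F" "finite G" "G \<subseteq> F" "\<forall>L\<in>G. x L \<in> L" "sum x G = 0"
  shows "\<forall>L\<in>G. x L = 0"
  using assms unfolding indep_ideals_def by blast

lemma udim1:
  assumes ne: "nicely_essential_subring A" and ind: "indep_ideals A F"
  shows "inj_on SL F \<and> indep_ideals UNIV (SL ` F)"
proof -
  have LF: "\<And>L. L \<in> F \<Longrightarrow> left_ideal A L \<and> L \<noteq> {0}" using ind by (simp add: indep_ideals_def)
  have LS: "\<And>L. L \<in> F \<Longrightarrow> left_submodule A L" using LF by (simp add: left_ideal_def)
  have inj: "inj_on SL F"
  proof (rule inj_onI, rule ccontr)
    fix L L' assume L: "L \<in> F" "L' \<in> F" "SL L = SL L'" "L \<noteq> L'"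
    have "0 \<in> L" using LS[OF L(1)] by (simp add: left_submodule_def)
    then obtain l where l: "l \<in> L" "l \<noteq> 0" using LF[OF L(1)] by blast
    have "l \<in> SL L'" using L(3) L_sub_SL l(1) by blast
    then obtain a where a: "a \<in> A" "a*l \<in> L'" "a*l \<noteq> 0" using SL_pick1[OF ne LS[OF L(2)] _ l(2)] by blast
    have "a*l \<in> L" using LS[OF L(1)] a(1) l(1) by (simp add: left_submodule_def)
    then have "a*l = 0" using indep_pair[OF ind L(1) L(2) L(4)] a(2) by blast
    then show False using a(3) by blast
  qed
  have H: "\<forall>L\<in>G'. x L = 0" if G': "finite G'" "G' \<subseteq> F" "\<forall>L\<in>G'. x L \<in> SL L" "sum x G' = 0" for G' x
  proof -
    have "\<forall>M\<in>G'. left_submodule A M \<and> x M \<in> SL M" using G' LS by blast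
    from SL_pick[OF ne G'(1) this finite_imageI[OF G'(1), of x]]
    obtain a where a: "a \<in> A" "\<forall>M\<in>G'. a * x M \<in> M" "\<forall>z\<in>x ` G'. a*z \<in> A \<and> (z \<noteq> 0 \<longrightarrow> a*z \<noteq> 0)"
      by blast
    have "(\<Sum>L\<in>G'. a * x L) = 0" using G'(4) by (simp add: sum_distrib_left[symmetric])
    then have "\<forall>L\<in>G'. a * x L = 0" using indepD[OF ind G'(1,2), of "\<lambda>L. a * x L"] a(2) by blast
    then show ?thesis using a(3) by blast
  qed
  have i2: "\<forall>G x. finite G \<and> G \<subseteq> SL ` F \<and> (\<forall>M\<in>G. x M \<in> M) \<and> sum x G = 0 \<longrightarrow> (\<forall>M\<in>G. x M = 0)"
    by (rule indep_image[OF inj]) (rule H)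
  have i1: "\<forall>M\<in>SL ` F. left_ideal UNIV M \<and> M \<noteq> {0}"
  proof
    fix M assume "M \<in> SL ` F"
    then obtain L where L: "L \<in> F" "M = SL L" by blast
    have "0 \<in> L" using LS[OF L(1)] by (simp add: left_submodule_def)
    then obtain l where "l \<in> L" "l \<noteq> 0" using LF[OF L(1)] by blast
    then have "M \<noteq> {0}" using L(2) L_sub_SL by blast
    then show "left_ideal UNIV M \<and> M \<noteq> {0}" using L(2) SL_ideal by blast
  qed
  show ?thesis unfolding indep_ideals_def by (intro conjI inj i1 i2)
qed

lemma udim2:
  assumes ne: "nicely_essential_subring A" and ind: "indep_ideals UNIV F"
  shows "inj_on (\<lambda>M. A \<inter> M) F \<and> indep_ideals A ((\<lambda>M. A \<inter> M) ` F)"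
proof -
  have sub: "is_subring A" using ne by (rule ne_sub)
  have LF: "\<And>L. L \<in> F \<Longrightarrow> left_ideal UNIV L \<and> L \<noteq> {0}" using ind by (simp add: indep_ideals_def)
  have LS: "\<And>L. L \<in> F \<Longrightarrow> left_submodule UNIV L" using LF by (simp add: left_ideal_def)
  have nz: "\<And>L. L \<in> F \<Longrightarrow> A \<inter> L \<noteq> {0}" using Int_nz[OF ne submod_UNIV[OF LS]] LF by blast
  have inj: "inj_on (\<lambda>M. A \<inter> M) F"
  proof (rule inj_onI, rule ccontr)
    fix L L' assume L: "L \<in> F" "L' \<in> F" "A \<inter> L = A \<inter> L'" "L \<noteq> L'"
    have "0 \<in> A \<inter> L" using LS[OF L(1)] sub by (simp add: left_submodule_def is_subring_def)
    then obtain l where l: "l \<in> A \<inter> L" "l \<noteq> 0" using nz[OF L(1)] by blast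
    then have "l \<in> L'" using L(3) by blast
    then show False using indep_pair[OF ind L(1) L(2) L(4)] l by blast
  qed
  have H: "\<forall>L\<in>G'. x L = 0" if G': "finite G'" "G' \<subseteq> F" "\<forall>L\<in>G'. x L \<in> A \<inter> L" "sum x G' = 0" for G' x
  proof -
    have "\<forall>L\<in>G'. x L \<in> L" using G'(3) by blast
    then show ?thesis using indepD[OF ind G'(1,2) _ G'(4)] by blast
  qed
  have i2: "\<forall>G x. finite G \<and> G \<subseteq> (\<lambda>M. A \<inter> M) ` F \<and> (\<forall>M\<in>G. x M \<in> M) \<and> sum x G = 0 \<longrightarrow> (\<forall>M\<in>G. x M = 0)"
    by (rule indep_image[OF inj]) (rule H)
  have i1: "\<forall>M\<in>(\<lambda>M. A \<inter> M) ` F. left_ideal A M \<and> M \<noteq> {0}"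
    using Int_ideal[OF sub submod_UNIV[OF LS]] nz by blast
  show ?thesis unfolding indep_ideals_def by (intro conjI inj i1 i2)
qed

lemma part_udim:
  assumes ne: "nicely_essential_subring A"
  shows "udim_le (UNIV::'a::ring_1 set) K \<longleftrightarrow> udim_le A K"
proof
  assume u: "udim_le (UNIV::'a set) K"
  show "udim_le A K" unfolding udim_le_def
  proof (intro allI impI)
    fix F assume "indep_ideals A F"
    from udim1[OF ne this] have i: "inj_on SL F" "indep_ideals UNIV (SL ` F)" by auto
    then obtain f where f: "inj_on f (SL ` F)" "f ` SL ` F \<subseteq> K" using u unfolding udim_le_def by blast
    have "inj_on (f \<circ> SL) F" using i(1) f(1) by (rule comp_inj_on)
    moreover have "(f \<circ> SL) ` F \<subseteq> K" using f(2) by (simp add: image_comp)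
    ultimately show "\<exists>f. inj_on f F \<and> f ` F \<subseteq> K" by blast
  qed
next
  assume u: "udim_le A K"
  show "udim_le (UNIV::'a set) K" unfolding udim_le_def
  proof (intro allI impI)
    fix F :: "'a set set" assume "indep_ideals UNIV F"
    from udim2[OF ne this] have i: "inj_on (\<lambda>M. A \<inter> M) F" "indep_ideals A ((\<lambda>M. A \<inter> M) ` F)" by auto
    then obtain f where f: "inj_on f ((\<lambda>M. A \<inter> M) ` F)" "f ` (\<lambda>M. A \<inter> M) ` F \<subseteq> K"
      using u unfolding udim_le_def by blast
    have "inj_on (f \<circ> (\<lambda>M. A \<inter> M)) F" using i(1) f(1) by (rule comp_inj_on)
    moreover have "(f \<circ> (\<lambda>M. A \<inter> M)) ` F \<subseteq> K" using f(2) by (simp add: image_comp)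
    ultimately show "\<exists>f. inj_on f F \<and> f ` F \<subseteq> K" by blast
  qed
qed



lemma sub_nz: "left_submodule B K \<Longrightarrow> K \<noteq> {0} \<Longrightarrow> \<exists>x\<in>K. x \<noteq> 0"
  by (auto simp: left_submodule_def)

lemma part_b:
  assumes ne: "nicely_essential_subring A" and L: "left_submodule A L" and Lnz: "L \<noteq> {0}"
  shows "(uniform_in A (A \<inter> L) \<longleftrightarrow> uniform_in (UNIV::'a::ring_1 set) (SL L))
        \<and> (essential_in A (A \<inter> L) \<longleftrightarrow> essential_in (UNIV::'a set) (SL L))"
proof -
  have sub: "is_subring A" using ne by (rule ne_sub)
  have ALi: "left_ideal A (A \<inter> L)" using Int_ideal[OF sub L] .
  have ALnz: "A \<inter> L \<noteq> {0}" using Int_nz[OF ne L Lnz] .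
  have SLnz: "SL L \<noteq> {0}" using Lnz L_sub_SL[of L] sub_nz[OF L Lnz] by blast
  have SLi: "left_ideal UNIV (SL L)" by (rule SL_ideal)
  have red: "left_ideal A (A \<inter> (L \<inter> K)) \<and> A \<inter> (L \<inter> K) \<noteq> {0}"
    if K: "left_ideal UNIV K" "K \<subseteq> SL L" "K \<noteq> {0}" for K
  proof -
    have Ks: "left_submodule UNIV K" using K by (simp add: left_ideal_def)
    have "left_ideal A (A \<inter> (L \<inter> K))" using Int_ideal[OF sub submod_Int[OF L submod_UNIV[OF Ks]]] .
    moreover obtain y where y: "y \<in> K" "y \<noteq> 0" using sub_nz[OF Ks K(3)] by blast
    have "y \<in> SL L" using y K(2) by blast
    then obtain a where a: "a \<in> A" "a*y \<in> L" "a*y \<in> A" "a*y \<noteq> 0" using SL_pick1[OF ne L _ y(2)] by blast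
    have "a*y \<in> K" using Ks y by (simp add: left_submodule_def)
    then have "A \<inter> (L \<inter> K) \<noteq> {0}" using a by blast
    ultimately show ?thesis by blast
  qed
  have U1: "uniform_in (UNIV::'a set) (SL L)" if U: "uniform_in A (A \<inter> L)"
  proof -
    have "K \<inter> K' \<noteq> {0}" if K: "left_ideal UNIV K" "left_ideal UNIV K'" "K \<subseteq> SL L" "K' \<subseteq> SL L"
       "K \<noteq> {0}" "K' \<noteq> {0}" for K K'
    proof -
      have r1: "left_ideal A (A \<inter> (L \<inter> K)) \<and> A \<inter> (L \<inter> K) \<noteq> {0}" using red K by blast
      have r2: "left_ideal A (A \<inter> (L \<inter> K')) \<and> A \<inter> (L \<inter> K') \<noteq> {0}" using red K by blast
      have "A \<inter> (L \<inter> K) \<subseteq> A \<inter> L" "A \<inter> (L \<inter> K') \<subseteq> A \<inter> L" by auto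
      then have "A \<inter> (L \<inter> K) \<inter> (A \<inter> (L \<inter> K')) \<noteq> {0}" using U r1 r2 unfolding uniform_in_def by blast
      moreover have "0 \<in> A \<inter> (L \<inter> K) \<inter> (A \<inter> (L \<inter> K'))"
        using r1 r2 by (simp add: left_ideal_def left_submodule_def)
      ultimately obtain z where "z \<in> A \<inter> (L \<inter> K) \<inter> (A \<inter> (L \<inter> K'))" "z \<noteq> 0" by blast
      then show ?thesis by blast
    qed
    then show ?thesis using SLi SLnz unfolding uniform_in_def by blast
  qed
  have U2: "uniform_in A (A \<inter> L)" if U: "uniform_in (UNIV::'a set) (SL L)"
  proof -
    have "K \<inter> K' \<noteq> {0}" if K: "left_ideal A K" "left_ideal A K'" "K \<subseteq> A \<inter> L" "K' \<subseteq> A \<inter> L"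
       "K \<noteq> {0}" "K' \<noteq> {0}" for K K'
    proof
      assume d: "K \<inter> K' = {0}"
      have Ks: "left_submodule A K" "left_submodule A K'" using K by (auto simp: left_ideal_def)
      have "SL K \<subseteq> SL L" "SL K' \<subseteq> SL L" using K(3,4) SL_mono by (meson le_infE)+
      moreover have "SL K \<noteq> {0}" using L_sub_SL[of K] sub_nz[OF Ks(1) K(5)] by blast
      moreover have "SL K' \<noteq> {0}" using L_sub_SL[of K'] sub_nz[OF Ks(2) K(6)] by blast
      ultimately have "SL K \<inter> SL K' \<noteq> {0}" using U SL_ideal unfolding uniform_in_def by blast
      then show False using part_a1[OF ne K(1,2) d] by blast
    qed
    then show ?thesis using ALi ALnz unfolding uniform_in_def by blast
  qed
  have E1: "essential_in (UNIV::'a set) (SL L)" if U: "essential_in A (A \<inter> L)"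
  proof -
    have "SL L \<inter> K \<noteq> {0}" if K: "left_ideal UNIV K" "K \<noteq> {0}" for K
    proof -
      have Ks: "left_submodule UNIV K" using K by (simp add: left_ideal_def)
      have "left_ideal A (A \<inter> K)" using Int_ideal[OF sub submod_UNIV[OF Ks]] .
      moreover have "A \<inter> K \<noteq> {0}" using Int_nz[OF ne submod_UNIV[OF Ks] K(2)] .
      ultimately have "(A \<inter> L) \<inter> (A \<inter> K) \<noteq> {0}" using U unfolding essential_in_def by blast
      moreover have "0 \<in> (A \<inter> L) \<inter> (A \<inter> K)" using ALi Ks sub
        by (simp add: left_ideal_def left_submodule_def)
      ultimately obtain z where "z \<in> (A \<inter> L) \<inter> (A \<inter> K)" "z \<noteq> 0" by blast
      then show ?thesis using L_sub_SL[of L] by blast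
    qed
    then show ?thesis using SLi unfolding essential_in_def by blast
  qed
  have E2: "essential_in A (A \<inter> L)" if U: "essential_in (UNIV::'a set) (SL L)"
  proof -
    have "(A \<inter> L) \<inter> K \<noteq> {0}" if K: "left_ideal A K" "K \<noteq> {0}" for K
    proof -
      have Ks: "left_submodule A K" "K \<subseteq> A" using K by (auto simp: left_ideal_def)
      have "SL K \<noteq> {0}" using L_sub_SL[of K] sub_nz[OF Ks(1) K(2)] by blast
      then have "SL L \<inter> SL K \<noteq> {0}" using U SL_ideal[of K] unfolding essential_in_def by blast
      then obtain y where y: "y \<in> SL L" "y \<in> SL K" "y \<noteq> 0" using SL.zero by blast
      obtain a where a: "a \<in> A" "a*y \<in> L" "a*y \<in> K" "a*y \<noteq> 0"
        using SL_pick2[OF ne L y(1) Ks(1) y(2) y(3)] by blast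
      then have "a*y \<in> (A \<inter> L) \<inter> K" using Ks(2) by blast
      then show ?thesis using a(4) by blast
    qed
    then show ?thesis using ALi unfolding essential_in_def by blast
  qed
  show ?thesis using U1 U2 E1 E2 by blast
qed

theorem mainTheorem3:
  fixes A :: "'a::ring_1 set"
  assumes ne: "nicely_essential_subring A"
  shows
   "((\<forall>L L'. left_ideal A L \<and> left_ideal A L' \<and> L \<inter> L' = {0} \<longrightarrow> SL L \<inter> SL L' = {0})
     \<and> (\<forall>K. udim_le (UNIV::'a set) K \<longleftrightarrow> udim_le A K)
     \<and> sing A = A \<inter> sing (UNIV::'a set)
     \<and> (\<forall>E. finite E \<and> E \<subseteq> sing (UNIV::'a set) \<and> 0 \<notin> E \<longrightarrow>
           (\<exists>a\<in>A. \<forall>x\<in>E. a * x \<noteq> 0 \<and> a * x \<in> sing A)))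
    \<and> (\<forall>L. left_submodule A L \<and> L \<noteq> {0} \<longrightarrow>
          (uniform_in A (A \<inter> L) \<longleftrightarrow> uniform_in (UNIV::'a set) (SL L))
        \<and> (essential_in A (A \<inter> L) \<longleftrightarrow> essential_in (UNIV::'a set) (SL L)))"
proof -
  have 1: "\<forall>L L'. left_ideal A L \<and> left_ideal A L' \<and> L \<inter> L' = {0} \<longrightarrow> SL L \<inter> SL L' = {0}"
    using part_a1[OF ne] by blast
  have 2: "\<forall>K. udim_le (UNIV::'a set) K \<longleftrightarrow> udim_le A K"
    using part_udim[OF ne] by blast
  have 4: "\<forall>E. finite E \<and> E \<subseteq> sing (UNIV::'a set) \<and> 0 \<notin> E \<longrightarrow>
           (\<exists>a\<in>A. \<forall>x\<in>E. a * x \<noteq> 0 \<and> a * x \<in> sing A)"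
    using part_a4[OF ne] by blast
  have 5: "\<forall>L. left_submodule A L \<and> L \<noteq> {0} \<longrightarrow>
          (uniform_in A (A \<inter> L) \<longleftrightarrow> uniform_in (UNIV::'a set) (SL L))
        \<and> (essential_in A (A \<inter> L) \<longleftrightarrow> essential_in (UNIV::'a set) (SL L))"
    using part_b[OF ne] by blast
  show ?thesis by (intro conjI 1 2 4 5 part_sing[OF ne])
qed

end
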